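(* Fix a countable base $\mathcal{B}$ for the topology of $\mathbb{R}$. Let $\sigma$ be a strategy for \textsc{Bob} in $\mathsf{BM}_\mathrm{fin}(\mathbb{R})$, let $X\subseteq\mathbb{R}$ be a countable set and let $\mathcal{Y}$ be a countable family of nowhere dense subsets of $\mathbb{R}$. Then there exists a sequence $s=\langle\mathcal{A}_n:n\in\omega\rangle$ of finite collections of members of $\mathcal{B}$ (moves of \textsc{Alice}, compatible with $\sigma$) such that $\sigma*s$ is a closed nowhere dense subset of $\mathbb{R}$ disjoint from $X\cup\bigcup\mathcal{Y}$.
   Context: The game $\mathsf{BM}_\mathrm{fin}(\mathbb{R})$: \textsc{Alice} plays a non-empty open set $A_0$ (write $\mathcal{A}_0=\{A_0\}$); \textsc{Bob} plays a finite collection $\mathcal{B}_0$ of non-empty open subsets of $A_0$; in inning $n+1$, for each $B \in \mathcal{B}_n$ \textsc{Alice} plays a non-empty open set $A_B \subseteq B$, letting $\mathcal{A}_{n+1}=\{A_B : B\in\mathcal{B}_n\}$, and \textsc{Bob} plays a finite collection $\mathcal{B}_{n+1}$ of non-empty open subsets of $\bigcup\mathcal{A}_{n+1}$; \textsc{Bob} wins if $\bigcap_{n}\bigcup\mathcal{B}_n\neq\emptyset$. A strategy $\sigma$ for \textsc{Bob} assigns to each finite sequence $\langle\mathcal{A}_0,\dots,\mathcal{A}_n\rangle$ of \textsc{Alice}'s moves his answer $\sigma(\langle\mathcal{A}_0,\dots,\mathcal{A}_n\rangle)$. For such $\sigma$ and a sequence $s=\langle\mathcal{A}_n:n\in\omega\rangle$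 of \textsc{Alice}'s moves compatible with $\sigma$ (i.e. forming a legal play against $\sigma$), $\sigma*s=\bigcap_{n\in\omega}\bigcup\sigma(\langle\mathcal{A}_0,\dots,\mathcal{A}_n\rangle)$. *)

theory Defs
  imports "HOL-Analysis.Analysis"
begin

definition nowhere_dense :: "real set \<Rightarrow> bool" where
  "nowhere_dense S \<longleftrightarrow> interior (closure S) = {}"

definition alice_answer :: "real set set \<Rightarrow> real set set \<Rightarrow> bool" where
  "alice_answer Bs As \<longleftrightarrow>
     (\<exists>f. (\<forall>B\<in>Bs. open (f B) \<and> f B \<noteq> {} \<and> f B \<subseteq> B) \<and> As = f ` Bs)"

definition legal_pos :: "(real set set list \<Rightarrow> real set set) \<Rightarrow> real set set list \<Rightarrow> bool" where
  "legal_pos \<sigma> ps \<longleftrightarrow> ps \<noteq> [] \<and>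
     (\<exists>A0. open A0 \<and> A0 \<noteq> {} \<and> ps ! 0 = {A0}) \<and>
     (\<forall>k. Suc k < length ps \<longrightarrow> alice_answer (\<sigma> (take (Suc k) ps)) (ps ! Suc k))"

definition bob_strategy :: "(real set set list \<Rightarrow> real set set) \<Rightarrow> bool" where
  "bob_strategy \<sigma> \<longleftrightarrow> (\<forall>ps. legal_pos \<sigma> ps \<longrightarrow>
     finite (\<sigma> ps) \<and> (\<forall>B\<in>\<sigma> ps. open B \<and> B \<noteq> {} \<and> B \<subseteq> \<Union>(last ps)))"

definition compatible :: "(real set set list \<Rightarrow> real set set) \<Rightarrow> (nat \<Rightarrow> real set set) \<Rightarrow> bool" where
  "compatible \<sigma> s \<longleftrightarrow> (\<forall>n. legal_pos \<sigma> (map s [0..<Suc n]))"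

definition outcome :: "(real set set list \<Rightarrow> real set set) \<Rightarrow> (nat \<Rightarrow> real set set) \<Rightarrow> real set" where
  "outcome \<sigma> s = (\<Inter>n. \<Union>(\<sigma> (map s [0..<Suc n])))"

end

theory Submission
  imports Defs
begin

primrec Lseq :: "real set \<Rightarrow> (nat \<Rightarrow> real set \<Rightarrow> real set) \<Rightarrow> (real set set list \<Rightarrow> real set set) \<Rightarrow> nat \<Rightarrow> real set set list" where
  "Lseq A0 g \<sigma> 0 = [{A0}]"
| "Lseq A0 g \<sigma> (Suc n) = Lseq A0 g \<sigma> n @ [g n ` \<sigma> (Lseq A0 g \<sigma> n)]"

lemma Lseq_length: "length (Lseq A0 g \<sigma> n) = Suc n"
  by (induction n) auto

lemma Lseq_nth: "k \<le> n \<Longrightarrow> Lseq A0 g \<sigma> n ! k = Lseq A0 g \<sigma> k ! k"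
proof (induction n)
  case 0 then show ?case by simp
next
  case (Suc n)
  show ?case
  proof (cases "k = Suc n")
    case False
    then have "k \<le> n" using Suc.prems by simp
    then show ?thesis using Suc.IH by (simp add: nth_append Lseq_length)
  qed simp
qed

lemma Lseq_map: "map (\<lambda>k. Lseq A0 g \<sigma> k ! k) [0..<Suc n] = Lseq A0 g \<sigma> n"
proof (rule nth_equalityI)
  show "length (map (\<lambda>k. Lseq A0 g \<sigma> k ! k) [0..<Suc n]) = length (Lseq A0 g \<sigma> n)"
    by (simp add: Lseq_length)
  fix i assume "i < length (map (\<lambda>k. Lseq A0 g \<sigma> k ! k) [0..<Suc n])"
  then have i: "i \<le> n" by simp
  have "map (\<lambda>k. Lseq A0 g \<sigma> k ! k) [0..<Suc n] ! i = Lseq A0 g \<sigma> i ! i"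
    using i by (simp del: upt_Suc)
  also have "\<dots> = Lseq A0 g \<sigma> n ! i" using Lseq_nth[OF i] by simp
  finally show "map (\<lambda>k. Lseq A0 g \<sigma> k ! k) [0..<Suc n] ! i = Lseq A0 g \<sigma> n ! i" .
qed

lemma Lseq_last: "last (Lseq A0 g \<sigma> (Suc n)) = g n ` \<sigma> (Lseq A0 g \<sigma> n)"
  by simp

lemma Lseq_0: "Lseq A0 g \<sigma> n ! 0 = {A0}"
  using Lseq_nth[of 0 n A0 g \<sigma>] by simp

lemma legal_snoc:
  assumes "legal_pos \<sigma> ps" "alice_answer (\<sigma> ps) As"
  shows "legal_pos \<sigma> (ps @ [As])"
  unfolding legal_pos_def
proof (intro conjI allI impI)
  show "ps @ [As] \<noteq> []" by simp
  show "\<exists>A0. open A0 \<and> A0 \<noteq> {} \<and> (ps @ [As]) ! 0 = {A0}"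
    using assms(1) unfolding legal_pos_def by (auto simp: nth_append)
  fix k assume k: "Suc k < length (ps @ [As])"
  show "alice_answer (\<sigma> (take (Suc k) (ps @ [As]))) ((ps @ [As]) ! Suc k)"
  proof (cases "Suc k < length ps")
    case True
    then show ?thesis using assms(1) unfolding legal_pos_def by (simp add: nth_append)
  next
    case False
    then have "Suc k = length ps" using k by simp
    then show ?thesis using assms(2) by simp
  qed
qed

lemma exists_good:
  fixes W C :: "real set"
  assumes B: "topological_basis \<B>" and W: "open W" "W \<noteq> {}"
    and C: "closed C" "interior C = {}"
  shows "\<exists>A. A \<in> \<B> \<and> A \<noteq> {} \<and> closure A \<subseteq> W - C"
proof -
  have o: "open (W - C)" using W C by (simp add: open_Diff)
  have "W - C \<noteq> {}"
  proof
    assume "W - C = {}"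
    then have "W \<subseteq> C" by blast
    then have "W \<subseteq> interior C" using W by (simp add: interior_maximal)
    then show False using C W by simp
  qed
  then obtain y where y: "y \<in> W - C" by blast
  obtain e where e: "e > 0" "ball y e \<subseteq> W - C" using o y open_contains_ball by blast
  obtain V where V: "V \<in> \<B>" "y \<in> V" "V \<subseteq> ball y (e/2)"
    using topological_basisE[OF B, of "ball y (e/2)" y] e by auto
  have "closure V \<subseteq> cball y (e/2)"
    using V by (meson ball_subset_cball closed_cball closure_minimal order_trans)
  also have "\<dots> \<subseteq> ball y e" using e by (simp add: cball_subset_ball_iff)
  finally show ?thesis using V e by blast
qed

theorem lemma4p8:
  fixes \<B> :: "real set set" and \<sigma> :: "real set set list \<Rightarrow> real set set"
    and X :: "real set" and \<Y> :: "real set set"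
  assumes "countable \<B>" and "topological_basis \<B>"
    and "bob_strategy \<sigma>"
    and "countable X"
    and "countable \<Y>" and "\<forall>Y\<in>\<Y>. nowhere_dense Y"
  shows "\<exists>s. (\<forall>n. finite (s n) \<and> s n \<subseteq> \<B>) \<and> compatible \<sigma> s \<and>
    closed (outcome \<sigma> s) \<and> nowhere_dense (outcome \<sigma> s) \<and>
    outcome \<sigma> s \<inter> (X \<union> \<Union>\<Y>) = {}"
proof -
  note basis = assms(2)
  define CC where "CC = closure ` \<Y> \<union> (\<lambda>x. {x}) ` (X \<union> \<rat>)"
  have CCne: "CC \<noteq> {}" unfolding CC_def by auto
  have CCc: "countable CC" unfolding CC_def using assms(4,5) countable_rat by auto
  have CCprop: "closed C \<and> interior C = {}" if "C \<in> CC" for C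
    using that assms(6) unfolding CC_def nowhere_dense_def by auto
  define c where "c n = from_nat_into CC n" for n
  have cprop: "closed (c n) \<and> interior (c n) = {}" for n
    using CCprop from_nat_into[OF CCne] unfolding c_def by auto
  have crange: "range c = CC" unfolding c_def using range_from_nat_into[OF CCne CCc] .
  define g where "g n B = (SOME A. A \<in> \<B> \<and> A \<noteq> {} \<and> closure A \<subseteq> B - c n)" for n B
  have gprop: "g n B \<in> \<B> \<and> g n B \<noteq> {} \<and> closure (g n B) \<subseteq> B - c n"
    if "open B" "B \<noteq> {}" for n B
    unfolding g_def by (rule someI_ex) (use exists_good[OF basis that cprop[of n, THEN conjunct1] cprop[of n, THEN conjunct2]] in blast)
  have gprop2: "open (g n B) \<and> g n B \<subseteq> B" if "open B" "B \<noteq> {}" for n B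
    using gprop[OF that, of n] basis topological_basis_open closure_subset[of "g n B"] by blast
  obtain A0 where A0: "A0 \<in> \<B>" "0 \<in> A0"
    using topological_basisE[OF basis, of UNIV 0] by auto
  have A0o: "open A0" "A0 \<noteq> {}" using A0 basis topological_basis_open by auto
  define L where "L = Lseq A0 g \<sigma>"
  define s where "s k = L k ! k" for k
  have smap: "map s [0..<Suc n] = L n" for n unfolding s_def L_def by (rule Lseq_map)
  have legal: "legal_pos \<sigma> (L n)" for n
  proof (induction n)
    case 0 then show ?case using A0o unfolding L_def legal_pos_def by auto
  next
    case (Suc n)
    have bs: "finite (\<sigma> (L n)) \<and> (\<forall>B\<in>\<sigma> (L n). open B \<and> B \<noteq> {} \<and> B \<subseteq> \<Union>(last (L n)))"
      using assms(3) Suc.IH unfolding bob_strategy_def by blast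
    have "alice_answer (\<sigma> (L n)) (g n ` \<sigma> (L n))"
      unfolding alice_answer_def
    proof (rule exI[of _ "g n"], intro conjI ballI)
      fix B assume "B \<in> \<sigma> (L n)"
      then have "open B" "B \<noteq> {}" using bs by auto
      then show "open (g n B)" "g n B \<noteq> {}" "g n B \<subseteq> B" using gprop gprop2 by auto
    qed simp
    then show ?case using legal_snoc[OF Suc.IH] unfolding L_def by simp
  qed
  have bob: "finite (\<sigma> (L n)) \<and> (\<forall>B\<in>\<sigma> (L n). open B \<and> B \<noteq> {} \<and> B \<subseteq> \<Union>(last (L n)))" for n
    using assms(3) legal unfolding bob_strategy_def by blast
  define U where "U n = \<Union>(\<sigma> (L n))" for n
  have lastS: "last (L (Suc n)) = g n ` \<sigma> (L n)" for n unfolding L_def by simp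
  have key: "closure (U (Suc n)) \<subseteq> U n - c n" for n
  proof -
    have "U (Suc n) \<subseteq> \<Union>(g n ` \<sigma> (L n))"
      using bob[of "Suc n"] lastS[of n] unfolding U_def by auto
    then have "closure (U (Suc n)) \<subseteq> closure (\<Union>(g n ` \<sigma> (L n)))" by (rule closure_mono)
    also have "\<dots> \<subseteq> \<Union>(closure ` g n ` \<sigma> (L n))"
    proof (rule closure_minimal)
      show "\<Union>(g n ` \<sigma> (L n)) \<subseteq> \<Union>(closure ` g n ` \<sigma> (L n))"
        using closure_subset by blast
      show "closed (\<Union>(closure ` g n ` \<sigma> (L n)))"
        using bob[of n] by (intro closed_Union) auto
    qed
    also have "\<dots> \<subseteq> U n - c n"
      using bob[of n] gprop unfolding U_def by fastforce
    finally show ?thesis .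
  qed
  have out: "outcome \<sigma> s = (\<Inter>n. U n)"
    unfolding outcome_def U_def smap ..
  have out2: "outcome \<sigma> s = (\<Inter>n. closure (U (Suc n)))"
  proof
    show "outcome \<sigma> s \<subseteq> (\<Inter>n. closure (U (Suc n)))"
      unfolding out using closure_subset by blast
    show "(\<Inter>n. closure (U (Suc n))) \<subseteq> outcome \<sigma> s"
      unfolding out using key by blast
  qed
  have closedO: "closed (outcome \<sigma> s)" unfolding out2 by auto
  have disj: "outcome \<sigma> s \<inter> C = {}" if CCin: "C \<in> CC" for C
  proof -
    obtain n where n: "C = c n" using CCin crange by auto
    show ?thesis unfolding n out2 using key[of n] by blast
  qed
  have noQ: "q \<notin> outcome \<sigma> s" if "q \<in> \<rat>" for q
    using disj[of "{q}"] that unfolding CC_def by auto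
  have nd: "nowhere_dense (outcome \<sigma> s)"
    unfolding nowhere_dense_def closure_closed[OF closedO]
  proof (rule ccontr)
    assume "interior (outcome \<sigma> s) \<noteq> {}"
    then obtain x where x: "x \<in> interior (outcome \<sigma> s)" by blast
    then obtain e where e: "e > 0" "ball x e \<subseteq> outcome \<sigma> s"
      by (meson mem_interior)
    obtain q where q: "q \<in> \<rat>" "x < q" "q < x + e"
      using Rats_dense_in_real[of x "x + e"] e by auto
    have "q \<in> ball x e" using q by (simp add: dist_real_def)
    then show False using e noQ q by blast
  qed
  have disjXY: "outcome \<sigma> s \<inter> (X \<union> \<Union>\<Y>) = {}"
  proof -
    have "outcome \<sigma> s \<inter> X = {}" using disj unfolding CC_def by blast
    moreover have "outcome \<sigma> s \<inter> Y = {}" if "Y \<in> \<Y>" for Y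
      using disj[of "closure Y"] that closure_subset[of Y] unfolding CC_def by blast
    ultimately show ?thesis by blast
  qed
  have sB: "finite (s n) \<and> s n \<subseteq> \<B>" for n
  proof (cases n)
    case 0 then show ?thesis using A0 unfolding s_def L_def by simp
  next
    case (Suc m)
    have "s n = g m ` \<sigma> (L m)" unfolding s_def L_def Suc by (simp add: nth_append Lseq_length)
    then show ?thesis using bob[of m] gprop by auto
  qed
  have comp: "compatible \<sigma> s" unfolding compatible_def smap using legal by blast
  show ?thesis using sB comp closedO nd disjXY by blast
qed

end
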